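(* Let $T_1,\dots,T_n$ be triangles in $E$, let $S$ be the set of vertices of $\bigcap_{i=1}^nT_i$, let $0<\epsilon<1$, and let $P$ be the convex hull of all vertices of $T_1^{(1-\epsilon)},\dots,T_n^{(1-\epsilon)}$. Then $(P,S)$ is a NO instance of the intermediate polygon problem, i.e. there is no triangle $T$ with $S\subseteq T\subseteq P$.
   Context: For $d>0$ let $C_d=\{(x,y)\in\mathbb{R}^2: x^2+y^2\le d\}$, and $C=C_1$. $E$ is the set of all equilateral triangles $T\subseteq C$ whose vertices lie on the boundary of $C$. For $T\in E$, $T^{(1-\epsilon)}$ denotes the scaling of $T$ about the origin such that the vertices of $T^{(1-\epsilon)}$ lie on the boundary of $C_{1-\epsilon}$. An instance of the intermediate polygon problem is a polygon $P\subseteq\mathbb{R}^2$ and a finite point set $S$; it is a YES instance if there is a triangle $T$ with $S\subseteq T\subseteq P$, and a NO instance otherwise. *)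

theory Defs
  imports "HOL-Analysis.Analysis"
begin

type_synonym pt = "real ^ 2"

definition disk :: "real \<Rightarrow> pt set" where
  "disk d = {p. (p $ 1)^2 + (p $ 2)^2 \<le> d}"

definition is_triangle :: "pt set \<Rightarrow> bool" where
  "is_triangle T \<longleftrightarrow> (\<exists>a b c. \<not> collinear {a, b, c} \<and> T = convex hull {a, b, c})"

definition vertices :: "pt set \<Rightarrow> pt set" where
  "vertices K = {v. v extreme_point_of K}"

definition E_tri :: "pt set set" where
  "E_tri = {T. \<exists>a b c. T = convex hull {a, b, c} \<and> T \<subseteq> disk 1 \<and>
      a \<in> frontier (disk 1) \<and> b \<in> frontier (disk 1) \<and> c \<in> frontier (disk 1) \<and>
      a \<noteq> b \<and> dist a b = dist b c \<and> dist b c = dist c a}"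

text \<open>T^(1-eps): scaling of T about the origin so that its vertices lie on the
  boundary of C_(1-eps), i.e. scaling by the factor sqrt(1-eps).\<close>
definition scaled_tri :: "real \<Rightarrow> pt set \<Rightarrow> pt set" where
  "scaled_tri eps T = (\<lambda>x. sqrt (1 - eps) *\<^sub>R x) ` T"

definition ipp_yes :: "pt set \<Rightarrow> pt set \<Rightarrow> bool" where
  "ipp_yes P S \<longleftrightarrow> (\<exists>T. is_triangle T \<and> S \<subseteq> T \<and> T \<subseteq> P)"

end

theory Submission
  imports Defs
begin
lemma inner2: "(x::pt) \<bullet> y = x$1*y$1 + x$2*y$2"
  by (simp add: inner_vec_def sum_2)
lemma norm2: "(norm (x::pt))^2 = (x$1)^2 + (x$2)^2"
  unfolding power2_norm_eq_inner inner2 by (simp add: power2_eq_square)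
lemma disk1: "disk 1 = cball 0 1"
proof (rule set_eqI)
  fix p :: pt
  have F: "norm p \<le> 1 \<longleftrightarrow> (norm p)^2 \<le> 1^2" using abs_le_square_iff[of "norm p" 1] by simp
  have key: "(p$1)^2 + (p$2)^2 \<le> 1 \<longleftrightarrow> norm p \<le> 1"
    unfolding F norm2[of p] power_one by (rule refl)
  show "p \<in> disk 1 \<longleftrightarrow> p \<in> cball 0 1"
    unfolding disk_def mem_Collect_eq mem_cball dist_0_norm by (rule key)
qed

lemma cap:
  fixes u v x :: pt
  assumes "norm u = 1" "norm v = 1" "norm x \<le> r" "r < 1"
    "u \<bullet> x \<ge> 1/2" "v \<bullet> x \<ge> 1/2"
  shows "u \<bullet> v > -1/2"
proof -
  have "(u+v) \<bullet> x \<ge> 1" using assms by (simp add: inner_add_left)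
  moreover have "(u+v) \<bullet> x \<le> norm (u+v) * norm x" by (rule norm_cauchy_schwarz)
  moreover have "norm (u+v) * norm x \<le> norm (u+v) * r" using assms by (simp add: mult_left_mono)
  ultimately have "norm (u+v) * r \<ge> 1" by linarith
  have r0: "r \<ge> 0" using assms(3) norm_ge_zero[of x] by linarith
  have "norm (u+v) > 1"
  proof (rule ccontr)
    assume "\<not> norm (u+v) > 1"
    hence n1: "norm (u+v) \<le> 1" by simp
    have "norm (u+v) * r \<le> 1 * r" by (rule mult_right_mono[OF n1 r0])
    thus False using \<open>norm (u+v) * r \<ge> 1\<close> assms(4) by simp
  qed
  hence "(norm (u+v))^2 > 1" by (simp add: one_less_power)
  moreover have "(norm (u+v))^2 = 2 + 2 * (u \<bullet> v)"
  proof -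
    have uu: "u \<bullet> u = 1" using power2_norm_eq_inner[of u] assms(1) by simp
    have vv: "v \<bullet> v = 1" using power2_norm_eq_inner[of v] assms(2) by simp
    show ?thesis unfolding power2_norm_eq_inner
      by (simp add: inner_add_left inner_add_right inner_commute uu vv)
  qed
  ultimately show ?thesis by linarith
qed

definition e :: "real \<Rightarrow> pt" where "e t = vector [cos t, sin t]"
lemma e_inner: "e s \<bullet> e t = cos (s - t)"
  by (simp add: e_def inner2 cos_diff)
lemma e_norm: "norm (e t) = 1"
proof -
  have "(norm (e t))^2 = 1" by (simp add: norm2 e_def)
  thus ?thesis using norm_ge_zero by (metis power2_eq_1_iff abs_of_nonneg abs_neg_one abs_minus_cancel abs_one)
qed
lemma cos240: "cos (4*pi/3) = -1/2"
proof -
  have "4*pi/3 = pi/3 + pi" by simp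
  hence "cos (4*pi/3) = cos (pi/3 + pi)" by simp
  also have "\<dots> = -1/2" by (simp only: cos_periodic_pi cos_60)
  finally show ?thesis .
qed

lemma cover_false:
  fixes a b c :: pt
  assumes na: "norm a \<le> r" and nb: "norm b \<le> r" and nc: "norm c \<le> r" and r1: "r < 1"
    and cov: "\<And>u. norm u = 1 \<Longrightarrow> u \<bullet> a \<ge> 1/2 \<or> u \<bullet> b \<ge> 1/2 \<or> u \<bullet> c \<ge> 1/2"
  shows False
proof -
  define Z where "Z x = {t. 1/2 \<le> e t \<bullet> x}" for x
  have clo: "closed (Z x)" for x
  proof -
    have "Z x = {t. 1/2 \<le> cos t * x$1 + sin t * x$2}" by (simp add: Z_def inner2 e_def)
    thus ?thesis by (simp, intro closed_Collect_le continuous_intros)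
  qed
  have no2: "False" if "t \<in> Z x" "s \<in> Z x" "x \<in> {a,b,c}" "cos (t - s) = -1/2" for t s x
  proof -
    have "norm x \<le> r" using that(3) na nb nc by auto
    then have "e t \<bullet> e s > -1/2" using cap[OF e_norm e_norm _ r1] that(1,2) unfolding Z_def by auto
    then show False using that(4) e_inner by simp
  qed
  have cv: "t \<in> Z a \<union> Z b \<union> Z c" for t using cov[OF e_norm[of t]] unfolding Z_def by auto
  have c1: "cos (t - (t + 2*pi/3)) = -1/2" for t using cos_120 by simp
  have c2: "cos (t - (t + 4*pi/3)) = -1/2" for t using cos240 by simp
  have c3: "cos ((t + 2*pi/3) - (t + 4*pi/3)) = -1/2" for t
  proof -
    have "(t + 2*pi/3) - (t + 4*pi/3) = -(2*pi/3)" by simp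
    thus ?thesis using cos_120 by simp
  qed
  have disj: False if "t \<in> Z x" "t \<in> Z y" "x \<in> {a,b,c}" "y \<in> {a,b,c}" "z \<in> {a,b,c}"
     "{x,y,z} = {a,b,c}" for t x y z
  proof -
    have ex: "\<exists>w\<in>{x,y,z}. s \<in> Z w" for s
    proof -
      have "\<exists>w\<in>{a,b,c}. s \<in> Z w" using cv[of s] by blast
      thus ?thesis using that(6) by simp
    qed
    have "t + 2*pi/3 \<in> Z z"
      using ex[of "t + 2*pi/3"] no2[OF that(1) _ that(3) c1] no2[OF that(2) _ that(4) c1] by blast
    moreover have "t + 4*pi/3 \<in> Z z"
      using ex[of "t + 4*pi/3"] no2[OF that(1) _ that(3) c2] no2[OF that(2) _ that(4) c2] by blast
    ultimately show False using no2[OF _ _ that(5) c3] by blast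
  qed
  define I where "I = {0..2*pi/3}"
  have split: "I \<subseteq> A \<or> I \<subseteq> B" if "closed A" "closed B" "I \<subseteq> A \<union> B" "A \<inter> B \<inter> I = {}" for A B
    using connected_closed[of I] connected_Icc[of 0 "2*pi/3"] that unfolding I_def by blast
  have bad: False if "I \<subseteq> Z x" "x \<in> {a,b,c}" for x
  proof -
    have "0 \<in> I" "2*pi/3 \<in> I" unfolding I_def by auto
    thus False using no2[of 0 x "2*pi/3"] that c1[of 0] by auto
  qed
  have "I \<subseteq> Z a \<or> I \<subseteq> Z b \<union> Z c"
    apply (rule split)
    using clo cv apply auto[3]
    using disj[of _ a b c] disj[of _ a c b] by blast
  moreover have "I \<subseteq> Z b \<or> I \<subseteq> Z c" if "I \<subseteq> Z b \<union> Z c"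
    apply (rule split)
    using clo that apply auto[3]
    using disj[of _ b c a] by blast
  ultimately show False using bad by blast
qed
lemma key_real:
  fixes a1 a2 b1 b2 x1 x2 :: real
  assumes A: "a1^2+a2^2=1" and B: "b1^2+b2^2=1" and AB: "a1*b1+a2*b2 = -1/2"
  shows "(2*(x1*a1+x2*a2) + (x1*b1+x2*b2))*a1 + ((x1*a1+x2*a2) + 2*(x1*b1+x2*b2))*b1 = 3/2*x1"
    and "(2*(x1*a1+x2*a2) + (x1*b1+x2*b2))*a2 + ((x1*a1+x2*a2) + 2*(x1*b1+x2*b2))*b2 = 3/2*x2"
proof -
  define y1 where "y1 = (2*(x1*a1+x2*a2) + (x1*b1+x2*b2))*a1 + ((x1*a1+x2*a2) + 2*(x1*b1+x2*b2))*b1 - 3/2*x1"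
  define y2 where "y2 = (2*(x1*a1+x2*a2) + (x1*b1+x2*b2))*a2 + ((x1*a1+x2*a2) + 2*(x1*b1+x2*b2))*b2 - 3/2*x2"
  define D where "D = a1*b2 - a2*b1"
  have "D^2 = (a1^2+a2^2)*(b1^2+b2^2) - (a1*b1+a2*b2)^2" unfolding D_def by algebra
  hence D2: "D^2 = 3/4" using A B AB by (simp add: power2_eq_square)
  hence D0: "D \<noteq> 0" by auto
  have "y1*a1+y2*a2 = (x1*a1+x2*a2)*(2*(a1^2+a2^2) + (a1*b1+a2*b2) - 3/2) + (x1*b1+x2*b2)*(2*(a1*b1+a2*b2) + (a1^2+a2^2))"
    unfolding y1_def y2_def by algebra
  hence ya: "y1*a1+y2*a2 = 0" using A B AB by simp
  have "y1*b1+y2*b2 = (x1*a1+x2*a2)*(2*(a1*b1+a2*b2) + (b1^2+b2^2)) + (x1*b1+x2*b2)*((a1*b1+a2*b2) + 2*(b1^2+b2^2) - 3/2)"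
    unfolding y1_def y2_def by algebra
  hence yb: "y1*b1+y2*b2 = 0" using A B AB by simp
  have e1: "y1*D = b2*(y1*a1+y2*a2) - a2*(y1*b1+y2*b2)" unfolding D_def by (simp add: algebra_simps)
  have "y1*D = 0" using e1 unfolding ya yb by simp
  hence "y1 = 0" using D0 by simp
  moreover have e2: "y2*D = a1*(y1*b1+y2*b2) - b1*(y1*a1+y2*a2)" unfolding D_def by (simp add: algebra_simps)
  have "y2*D = 0" using e2 unfolding ya yb by simp
  hence "y2 = 0" using D0 by simp
  ultimately show "(2*(x1*a1+x2*a2) + (x1*b1+x2*b2))*a1 + ((x1*a1+x2*a2) + 2*(x1*b1+x2*b2))*b1 = 3/2*x1"
    and "(2*(x1*a1+x2*a2) + (x1*b1+x2*b2))*a2 + ((x1*a1+x2*a2) + 2*(x1*b1+x2*b2))*b2 = 3/2*x2"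
    unfolding y1_def y2_def by linarith+
qed

lemma gram_real: "(a1*a1+a2*a2)*(b1*b1+b2*b2)*(c1*c1+c2*c2) + 2*(a1*b1+a2*b2)*(b1*c1+b2*c2)*(c1*a1+c2*a2)
   - (a1*a1+a2*a2)*(b1*c1+b2*c2)^2 - (b1*b1+b2*b2)*(c1*a1+c2*a2)^2 - (c1*c1+c2*c2)*(a1*b1+a2*b2)^2 = (0::real)"
  by (simp add: power2_eq_square algebra_simps)

lemma gram: "(x\<bullet>x)*(y\<bullet>y)*(z\<bullet>z) + 2*(x\<bullet>y)*(y\<bullet>z)*(z\<bullet>x) - (x\<bullet>x)*(y\<bullet>z)^2 - (y\<bullet>y)*(z\<bullet>x)^2 - (z\<bullet>z)*(x\<bullet>y)^2 = (0::real)"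
  for x y z :: pt
  unfolding inner2 by (rule gram_real)

lemma equi_disk:
  fixes a b c :: pt
  assumes na: "norm a = 1" and nb: "norm b = 1" and nc: "norm c = 1" and ab: "a \<noteq> b"
    and d1: "dist a b = dist b c" and d2: "dist b c = dist c a"
  shows "cball 0 (1/2) \<subseteq> convex hull {a,b,c}"
proof -
  have sq: "(dist x y)^2 = x\<bullet>x + y\<bullet>y - 2*(x\<bullet>y)" for x y :: pt
    unfolding dist_norm power2_norm_eq_inner by (simp add: inner_diff_left inner_diff_right inner_commute)
  have aa: "a\<bullet>a = 1" using power2_norm_eq_inner[of a] na by simp
  have bb: "b\<bullet>b = 1" using power2_norm_eq_inner[of b] nb by simp
  have cc: "c\<bullet>c = 1" using power2_norm_eq_inner[of c] nc by simp
  define t where "t = a \<bullet> b"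
  have bc: "b\<bullet>c = t" using sq[of a b] sq[of b c] d1 aa bb cc unfolding t_def by simp
  have ca: "c\<bullet>a = t" using sq[of c a] sq[of b c] d2 aa bb cc bc by simp
  have "1 + 2*t^3 - 3*t^2 = 0" using gram[of a b c] aa bb cc bc ca unfolding t_def[symmetric]
    by (simp add: power2_eq_square power3_eq_cube)
  hence "(t-1)^2*(2*t+1) = 0" by (simp add: power2_eq_square power3_eq_cube algebra_simps)
  moreover have "t < 1"
  proof -
    have "dist a b > 0" using ab by simp
    hence "(dist a b)^2 > 0" by simp
    thus ?thesis using sq[of a b] aa bb unfolding t_def by simp
  qed
  ultimately have t: "t = -1/2" by auto
  have "(a+b+c)\<bullet>(a+b+c) = 0" using aa bb cc bc ca t unfolding t_def
    by (simp add: inner_add_left inner_add_right inner_commute)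
  hence s0: "a+b+c = 0" by simp
  hence c1: "c$1 = -(a$1+b$1)" and c2: "c$2 = -(a$2+b$2)"
    by (metis add.commute add_eq_0_iff vector_add_component zero_index)+
  have A: "(a$1)^2+(a$2)^2=1" using norm2[of a] na by simp
  have B: "(b$1)^2+(b$2)^2=1" using norm2[of b] nb by simp
  have AB: "a$1*b$1+a$2*b$2 = -1/2" using t unfolding t_def inner2 .
  show ?thesis
  proof
    fix x :: pt assume "x \<in> cball 0 (1/2)"
    hence nx: "norm x \<le> 1/2" by simp
    have lo: "x \<bullet> v \<ge> -1/2" if "norm v = 1" for v
    proof -
      have "\<bar>x \<bullet> v\<bar> \<le> norm x * norm v" by (rule Cauchy_Schwarz_ineq2)
      thus ?thesis using nx that by simp
    qed
    define la where "la = 1/3 + 2/3*(x\<bullet>a)"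
    define lb where "lb = 1/3 + 2/3*(x\<bullet>b)"
    define lc where "lc = 1/3 + 2/3*(x\<bullet>c)"
    have "la \<ge> 0" "lb \<ge> 0" "lc \<ge> 0" using lo[OF na] lo[OF nb] lo[OF nc] unfolding la_def lb_def lc_def by simp_all
    moreover have "la + lb + lc = 1"
    proof -
      have "x\<bullet>a + x\<bullet>b + x\<bullet>c = 0" using s0 by (metis inner_add_right inner_zero_right)
      thus ?thesis unfolding la_def lb_def lc_def by linarith
    qed
    moreover have "x = la *\<^sub>R a + lb *\<^sub>R b + lc *\<^sub>R c"
    proof -
      note K = key_real[OF A B AB, of "x$1" "x$2"]
      have "x\<bullet>a + x\<bullet>b + x\<bullet>c = 0" using s0 by (metis inner_add_right inner_zero_right)
      then have xc: "x\<bullet>c = -(x\<bullet>a) - (x\<bullet>b)" by linarith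
      have comb: "x1 = (1/3+2/3*p)*a1 + (1/3+2/3*q)*b1 + (1/3+2/3*(-p-q))*(-(a1+b1))"
        if "(2*p+q)*a1 + (p+2*q)*b1 = 3/2*x1" for p q a1 b1 x1 :: real
      proof -
        have "(1/3+2/3*p)*a1 + (1/3+2/3*q)*b1 + (1/3+2/3*(-p-q))*(-(a1+b1)) = 2/3*((2*p+q)*a1 + (p+2*q)*b1)"
          by (simp add: field_simps)
        thus ?thesis using that by simp
      qed
      have pa: "x\<bullet>a = x$1*a$1+x$2*a$2" and pb: "x\<bullet>b = x$1*b$1+x$2*b$2" by (simp_all add: inner2 mult.commute)
      have g1: "x$1 = la*a$1 + lb*b$1 + lc*c$1" unfolding la_def lb_def lc_def xc c1
        using comb[OF K(1)[folded pa pb]] by linarith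
      have g2: "x$2 = la*a$2 + lb*b$2 + lc*c$2" unfolding la_def lb_def lc_def xc c2
        using comb[OF K(2)[folded pa pb]] by linarith
      show ?thesis unfolding vec_eq_iff forall_2 using g1 g2 by simp
    qed
    ultimately show "x \<in> convex hull {a,b,c}" unfolding convex_hull_3 by blast
  qed
qed
theorem mainTheorem13:
  fixes n :: nat and Tr :: "nat \<Rightarrow> pt set" and eps :: real
  assumes "n \<ge> 1"
    and "\<And>i. i \<in> {1..n} \<Longrightarrow> Tr i \<in> E_tri"
    and "0 < eps" and "eps < 1"
  shows "\<not> ipp_yes
           (convex hull (\<Union>i\<in>{1..n}. vertices (scaled_tri eps (Tr i))))
           (vertices (\<Inter>i\<in>{1..n}. Tr i))"
proof
  assume H: "ipp_yes (convex hull (\<Union>i\<in>{1..n}. vertices (scaled_tri eps (Tr i)))) (vertices (\<Inter>i\<in>{1..n}. Tr i))"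
  define r where "r = sqrt (1 - eps)"
  have r1: "r < 1" and r0: "r \<ge> 0" unfolding r_def using assms(3,4) by auto
  define P where "P = convex hull (\<Union>i\<in>{1..n}. vertices (scaled_tri eps (Tr i)))"
  define K where "K = (\<Inter>i\<in>{1..n}. Tr i)"
  have tri: "Tr i \<subseteq> cball 0 1 \<and> cball 0 (1/2) \<subseteq> Tr i \<and> compact (Tr i) \<and> convex (Tr i)"
    if i: "i \<in> {1..n}" for i
  proof -
    obtain a b c where T: "Tr i = convex hull {a,b,c}" "Tr i \<subseteq> disk 1"
      "a \<in> frontier (disk 1)" "b \<in> frontier (disk 1)" "c \<in> frontier (disk 1)"
      "a \<noteq> b" "dist a b = dist b c" "dist b c = dist c a"
      using assms(2)[OF i] unfolding E_tri_def mem_Collect_eq by (elim exE conjE) (rule that; assumption)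
    have "norm a = 1" "norm b = 1" "norm c = 1" using T(3-5) unfolding disk1 by simp_all
    then have "cball 0 (1/2) \<subseteq> Tr i" using equi_disk T(1,6-8) by simp
    moreover have "compact (Tr i)" unfolding T(1) by (rule finite_imp_compact_convex_hull) simp
    ultimately show ?thesis using T(1,2) disk1 by simp
  qed
  have n1: "1 \<in> {1..n}" using assms(1) by simp
  have Kc: "compact K"
  proof -
    have "closed K" unfolding K_def by (intro closed_INT ballI) (use tri compact_imp_closed in blast)
    moreover have "K \<subseteq> Tr 1" unfolding K_def using n1 by blast
    then have "bounded K" using tri[OF n1] compact_imp_bounded bounded_subset by blast
    ultimately show ?thesis by (simp add: compact_eq_bounded_closed)
  qed
  have Kv: "convex K" unfolding K_def using tri by (intro convex_INT) blast
  have KB: "cball 0 (1/2) \<subseteq> K" unfolding K_def using tri by (intro INT_greatest) simp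
  have KS: "K = convex hull (vertices K)"
    using Krein_Milman_Minkowski[OF Kc Kv] unfolding vertices_def .
  have PB: "P \<subseteq> cball 0 r"
    unfolding P_def
  proof (rule hull_minimal)
    show "convex (cball (0::pt) r)" by simp
    show "(\<Union>i\<in>{1..n}. vertices (scaled_tri eps (Tr i))) \<subseteq> cball 0 r"
    proof clarify
      fix i x assume i: "i \<in> {1..n}" and x: "x \<in> vertices (scaled_tri eps (Tr i))"
      then have "x \<in> scaled_tri eps (Tr i)" unfolding vertices_def extreme_point_of_def by simp
      then obtain y where y: "y \<in> Tr i" "x = r *\<^sub>R y" unfolding scaled_tri_def r_def by auto
      have "norm y \<le> 1" using tri[OF i] y(1) by auto
      then have "norm x \<le> r" using y(2) r0 by (simp add: mult_left_le)
      thus "x \<in> cball 0 r" by simp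
    qed
  qed
  obtain T where T: "is_triangle T" "vertices K \<subseteq> T" "T \<subseteq> P"
    using H[folded P_def K_def] unfolding ipp_yes_def by blast
  obtain a b c where Tabc: "T = convex hull {a,b,c}" using T(1) unfolding is_triangle_def by blast
  have KT: "K \<subseteq> T"
  proof -
    have "convex hull (vertices K) \<subseteq> T"
      by (rule hull_minimal[OF T(2)]) (simp add: Tabc)
    then show ?thesis by (rule order_trans[OF equalityD1[OF KS]])
  qed
  have nv: "norm v \<le> r" if "v \<in> {a,b,c}" for v
  proof -
    have "v \<in> convex hull {a,b,c}" using that hull_subset[of "{a,b,c}" convex] by blast
    hence "v \<in> cball 0 r" using Tabc T(3) PB by blast
    thus ?thesis by simp
  qed
  have cov: "u \<bullet> a \<ge> 1/2 \<or> u \<bullet> b \<ge> 1/2 \<or> u \<bullet> c \<ge> 1/2" if u1: "norm u = 1" for u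
  proof (rule ccontr)
    assume neg: "\<not> ?thesis"
    have "(1/2) *\<^sub>R u \<in> cball 0 (1/2)" using u1 by simp
    then have "(1/2) *\<^sub>R u \<in> convex hull {a,b,c}" using KB KT Tabc by blast
    then obtain wa wb wc where w: "0 \<le> wa" "0 \<le> wb" "0 \<le> wc" "wa + wb + wc = 1"
      "(1/2) *\<^sub>R u = wa *\<^sub>R a + wb *\<^sub>R b + wc *\<^sub>R c" unfolding convex_hull_3 by blast
    have "u \<bullet> ((1/2) *\<^sub>R u) = 1/2" using u1 power2_norm_eq_inner[of u] by simp
    then have eq: "wa * (u\<bullet>a) + wb * (u\<bullet>b) + wc * (u\<bullet>c) = 1/2"
      unfolding w(5) by (simp add: inner_add_right)
    have "wa * (u\<bullet>a - 1/2) + wb * (u\<bullet>b - 1/2) + wc * (u\<bullet>c - 1/2) = 0"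
      using eq w(4) by (simp add: algebra_simps)
    moreover have "wa * (u\<bullet>a - 1/2) \<le> 0" "wb * (u\<bullet>b - 1/2) \<le> 0" "wc * (u\<bullet>c - 1/2) \<le> 0"
      using neg w by (simp_all add: mult_nonneg_nonpos)
    moreover have "wa > 0 \<or> wb > 0 \<or> wc > 0" using w by linarith
    moreover have "wa * (u\<bullet>a - 1/2) < 0" if "wa > 0" using that neg by (simp add: mult_pos_neg)
    moreover have "wb * (u\<bullet>b - 1/2) < 0" if "wb > 0" using that neg by (simp add: mult_pos_neg)
    moreover have "wc * (u\<bullet>c - 1/2) < 0" if "wc > 0" using that neg by (simp add: mult_pos_neg)
    ultimately show False by linarith
  qed
  have na: "norm a \<le> r" and nb: "norm b \<le> r" and nc: "norm c \<le> r" using nv by auto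
  show False by (rule cover_false[OF na nb nc r1 cov])
qed

end
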